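(* Let $|\Psi\rangle$ be a normalized state of the periodic chain of length $L$ which is simultaneously an eigenvector of the translation operator $U$, of $H$, and of the charges $Q_\alpha$ and $Q_\beta$ (with $\alpha\neq\beta$). Then for every $x$, $$\langle\Psi|\,J_\alpha(x)\,q_\beta(0)-q_\alpha(x)\,J_\beta(1)\,|\Psi\rangle=\langle\Psi|J_\alpha(0)|\Psi\rangle\,\langle\Psi|q_\beta(0)|\Psi\rangle-\langle\Psi|q_\alpha(0)|\Psi\rangle\,\langle\Psi|J_\beta(0)|\Psi\rangle ,$$ where by translation invariance the one-point functions on the right-hand side do not depend on the site.
   Context: Consider a spin chain of length $L$ with periodic boundary conditions, Hilbert space $(\mathbb{C}^N)^{\otimes L}$, sites labelled by $x\in\mathbb{Z}$ modulo $L$. Let $U$ be the unitary one-site translation operator. A local operator family $\mathcal{O}(x)$ is called translation covariant if $\mathcal{O}(x+1)=U\mathcal{O}(x)U^{-1}$. The chain has a Hamiltonian $H=\sum_{x=1}^L h(x)$ with $h(x)$ local and translation covariant, and a family of mutually commuting conserved charges $Q_\alpha=\sum_{x=1}^L q_\alpha(x)$, with $q_\alpha(x)$ translation covariant local operators (charge densities), $[Q_\alpha,Q_\beta]=0$, $[H,Q_\alpha]=0$, $[U,Q_\alpha]=[U,H]=0$. The current operators $J_\alpha(x)$ are translation covariant local operators defined by the continuity equation $$ i\,[H,q_\alpha(x)]=J_\alpha(x)-J_\alpha(x+1)\quad\text{for all }x.$$ *)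

theory Defs
  imports "HOL-Analysis.Analysis"
begin

text \<open>Operators on the finite-dimensional Hilbert space are complex square matrices
  indexed by a finite type 'n (the computational basis of (C^N)^{tensor L}).\<close>

type_synonym 'n op = "complex^'n^'n"

definition adj :: "'n::finite op \<Rightarrow> 'n op" where
  "adj A = (\<chi> i j. cnj (A $ j $ i))"

fun mpow :: "'n::finite op \<Rightarrow> nat \<Rightarrow> 'n op" where
  "mpow A 0 = mat 1"
| "mpow A (Suc k) = A ** mpow A k"

definition comm :: "'n::finite op \<Rightarrow> 'n op \<Rightarrow> 'n op" where
  "comm A B = A ** B - B ** A"

definition unitary_op :: "'n::finite op \<Rightarrow> bool" where
  "unitary_op U \<longleftrightarrow> U ** adj U = mat 1 \<and> adj U ** U = mat 1"

definition hermitian_op :: "'n::finite op \<Rightarrow> bool" where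
  "hermitian_op A \<longleftrightarrow> adj A = A"

definition transl_cov :: "'n::finite op \<Rightarrow> (int \<Rightarrow> 'n op) \<Rightarrow> bool" where
  "transl_cov U Op \<longleftrightarrow> (\<forall>x. Op (x + 1) = U ** Op x ** matrix_inv U)"

definition is_eigvec :: "'n::finite op \<Rightarrow> complex^'n \<Rightarrow> bool" where
  "is_eigvec A v \<longleftrightarrow> v \<noteq> 0 \<and> (\<exists>c. A *v v = c *s v)"

definition expval :: "complex^'n \<Rightarrow> 'n::finite op \<Rightarrow> complex" where
  "expval \<psi> A = (\<Sum>i\<in>UNIV. cnj (\<psi> $ i) * (A *v \<psi>) $ i)"

definition normalized :: "complex^'n::finite \<Rightarrow> bool" where
  "normalized \<psi> \<longleftrightarrow> (\<Sum>i\<in>UNIV. cnj (\<psi> $ i) * \<psi> $ i) = 1"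

end

theory Submission
  imports Defs
begin

lemma adj_lemma:
  fixes A :: "'n::finite op"
  shows "(\<Sum>i\<in>UNIV. cnj (v$i) * (A *v w)$i) = (\<Sum>j\<in>UNIV. cnj ((adj A *v v)$j) * w$j)"
proof -
  have "(\<Sum>i\<in>UNIV. cnj (v$i) * (A *v w)$i) = (\<Sum>i\<in>UNIV. \<Sum>j\<in>UNIV. cnj (v$i) * A$i$j * w$j)"
    by (simp add: matrix_vector_mult_def sum_distrib_left mult.assoc)
  also have "\<dots> = (\<Sum>j\<in>UNIV. \<Sum>i\<in>UNIV. cnj (v$i) * A$i$j * w$j)" by (rule sum.swap)
  also have "\<dots> = (\<Sum>j\<in>UNIV. cnj ((adj A *v v)$j) * w$j)"
    by (simp add: matrix_vector_mult_def adj_def sum_distrib_left mult_ac)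
  finally show ?thesis .
qed

lemma mat_vec: "(mat c :: 'n::finite op) *v v = c *s v"
  proof -
  have "\<And>i. (\<Sum>j\<in>UNIV. (if i = j then c else 0) * v $ j) = c * v $ i"
    by (simp add: if_distrib[where f="\<lambda>x. x * _"] cong: if_cong)
  then show ?thesis by (simp add: vec_eq_iff matrix_vector_mult_def mat_def)
qed

lemma ev_add: "expval p (A + B) = expval p A + expval p B"
  by (simp add: expval_def matrix_vector_mult_add_rdistrib distrib_left sum.distrib)
lemma ev_diff: "expval p (A - B) = expval p A - expval p B"
  by (simp add: expval_def matrix_vector_mult_diff_rdistrib right_diff_distrib sum_subtractf)
lemma ev_sum: "finite S \<Longrightarrow> expval p (\<Sum>x\<in>S. f x) = (\<Sum>x\<in>S. expval p (f x))"
  by (induction S rule: finite_induct) (simp_all add: ev_add, simp add: expval_def)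
lemma ev_mat: "expval p (mat c ** A) = c * expval p A"
  by (simp add: expval_def matrix_vector_mul_assoc[symmetric] mat_vec sum_distrib_left mult_ac)
lemma ev_right: "A *v p = c *s p \<Longrightarrow> expval p (B ** A) = c * expval p B"
  by (simp add: expval_def matrix_vector_mul_assoc[symmetric] vector_scalar_commute sum_distrib_left mult_ac)
lemma ev_left: "adj A *v p = d *s p \<Longrightarrow> expval p (A ** B) = cnj d * expval p B"
proof -
  assume a: "adj A *v p = d *s p"
  have "expval p (A ** B) = (\<Sum>i\<in>UNIV. cnj (p$i) * (A *v (B *v p))$i)"
    by (simp add: expval_def matrix_vector_mul_assoc)
  also have "\<dots> = (\<Sum>j\<in>UNIV. cnj ((adj A *v p)$j) * (B *v p)$j)" by (rule adj_lemma)
  also have "\<dots> = cnj d * expval p B" by (simp add: a expval_def sum_distrib_left mult_ac)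
  finally show ?thesis .
qed

lemma ev_mat2: "expval p (X ** (mat c ** M)) = c * expval p (X ** M)"
  by (simp add: expval_def matrix_vector_mul_assoc[symmetric] mat_vec vector_scalar_commute sum_distrib_left mult_ac)
lemma ev_diffL: "expval p ((A - B) ** C) = expval p (A ** C) - expval p (B ** C)"
  by (simp add: expval_def matrix_vector_mul_assoc[symmetric] matrix_vector_mult_diff_rdistrib right_diff_distrib sum_subtractf)
lemma ev_diffR: "expval p (C ** (A - B)) = expval p (C ** A) - expval p (C ** B)"
  by (simp add: expval_def matrix_vector_mul_assoc[symmetric] matrix_vector_mult_diff_rdistrib matrix_vector_mult_diff_distrib right_diff_distrib sum_subtractf)
lemma ev_id: "normalized p \<Longrightarrow> expval p (mat 1) = 1"
  by (simp add: expval_def normalized_def)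
lemma ev_sumR: "finite S \<Longrightarrow> expval p (X ** (\<Sum>x\<in>S. f x)) = (\<Sum>x\<in>S. expval p (X ** f x))"
  by (induction S rule: finite_induct) (simp_all add: matrix_add_ldistrib ev_add, simp add: expval_def)
lemma ev_sumL: "finite S \<Longrightarrow> expval p ((\<Sum>x\<in>S. f x) ** X) = (\<Sum>x\<in>S. expval p (f x ** X))"
proof (induction S rule: finite_induct)
  case empty then show ?case by (simp add: expval_def)
next
  case (insert x F)
  have "(f x + sum f F) ** X = f x ** X + sum f F ** X"
    by (simp add: vec_eq_iff matrix_matrix_mult_def distrib_right sum.distrib)
  with insert show ?case by (simp add: ev_add)
qed

lemma adj_adj: "adj (adj A) = A"
  by (simp add: adj_def vec_eq_iff)

lemma herm_eig:
  fixes A :: "'n::finite op"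
  assumes "hermitian_op A" "A *v p = c *s p" "normalized p"
  shows "cnj c = c" "expval p (A ** X) = c * expval p X" "expval p (X ** A) = c * expval p X"
    "expval p A = c"
proof -
  have adjA: "adj A *v p = c *s p" using assms by (simp add: hermitian_op_def)
  have e1: "expval p (mat 1 ** A) = c" using ev_right[OF assms(2), of "mat 1"] ev_id[OF assms(3)] by (simp del: matrix_mul_lid)
  have e2: "expval p (A ** mat 1) = cnj c" using ev_left[OF adjA, of "mat 1"] ev_id[OF assms(3)] by (simp del: matrix_mul_rid)
  from e1 e2 show cc: "cnj c = c" by simp
  show "expval p (A ** X) = c * expval p X" using ev_left[OF adjA] cc by simp
  show "expval p (X ** A) = c * expval p X" using ev_right[OF assms(2)] .
  show "expval p A = c" using e1 by simp
qed

lemma int_shift_const: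
  fixes f :: "int \<Rightarrow> 'a"
  assumes "\<And>k. f (k + 1) = f k"
  shows "f k = f 0"
proof (induction k rule: int_induct[where k=0])
  case base then show ?case by simp
next
  case (step1 i) then show ?case using assms[of i] by simp
next
  case (step2 i) then show ?case using assms[of "i - 1"] by simp
qed

lemma msub_l: "(A::'n::finite op) ** (B - C) = A ** B - A ** C"
  by (simp add: vec_eq_iff matrix_matrix_mult_def right_diff_distrib sum_subtractf)
lemma msub_r: "((A::'n::finite op) - B) ** C = A ** C - B ** C"
  by (simp add: vec_eq_iff matrix_matrix_mult_def left_diff_distrib sum_subtractf)
lemma madd_r: "((A::'n::finite op) + B) ** C = A ** C + B ** C"
  by (simp add: vec_eq_iff matrix_matrix_mult_def distrib_right sum.distrib)

lemma comm_prod: "comm (H::'n::finite op) (X ** Y) = comm H X ** Y + X ** comm H Y"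
  by (simp add: comm_def msub_l msub_r matrix_mul_assoc)

theorem mainTheorem2:
  fixes N L :: nat
    and U H :: "'n::finite op"
    and h :: "int \<Rightarrow> 'n op"
    and Q :: "'i \<Rightarrow> 'n op"
    and q J :: "'i \<Rightarrow> int \<Rightarrow> 'n op"
    and \<Psi> :: "complex^'n"
    and \<alpha> \<beta> :: 'i
  assumes L_pos: "L \<ge> 1"
    and dim: "CARD('n) = N ^ L"
    and U_unitary: "unitary_op U"
    and U_periodic: "mpow U L = mat 1"
    and H_herm: "hermitian_op H"
    and Q_herm: "\<And>a. hermitian_op (Q a)"
    and h_cov: "transl_cov U h"
    and H_def: "H = (\<Sum>x\<in>{1..int L}. h x)"
    and q_cov: "\<And>a. transl_cov U (q a)"
    and Q_def: "\<And>a. Q a = (\<Sum>x\<in>{1..int L}. q a x)"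
    and QQ: "\<And>a b. comm (Q a) (Q b) = 0"
    and HQ: "\<And>a. comm H (Q a) = 0"
    and UQ: "\<And>a. comm U (Q a) = 0"
    and UH: "comm U H = 0"
    and J_cov: "\<And>a. transl_cov U (J a)"
    and continuity: "\<And>a x. mat \<i> ** comm H (q a x) = J a x - J a (x + 1)"
    and norm_Psi: "normalized \<Psi>"
    and eig_U: "is_eigvec U \<Psi>"
    and eig_H: "is_eigvec H \<Psi>"
    and eig_Qa: "is_eigvec (Q \<alpha>) \<Psi>"
    and eig_Qb: "is_eigvec (Q \<beta>) \<Psi>"
    and ab: "\<alpha> \<noteq> \<beta>"
  shows "\<forall>x::int.
    expval \<Psi> (J \<alpha> x ** q \<beta> 0 - q \<alpha> x ** J \<beta> 1)
      = expval \<Psi> (J \<alpha> 0) * expval \<Psi> (q \<beta> 0) - expval \<Psi> (q \<alpha> 0) * expval \<Psi> (J \<beta> 0)"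
proof -
  let ?p = \<Psi>
  have n1: "expval \<Psi> (mat 1) = 1" by (rule ev_id[OF norm_Psi])
  have UU1: "U ** adj U = mat 1" and UU2: "adj U ** U = mat 1"
    using U_unitary by (auto simp: unitary_op_def)
  have Ui: "matrix_inv U = adj U"
  proof -
    have ex: "\<exists>A'. U ** A' = mat 1 \<and> A' ** U = mat 1" using UU1 UU2 by blast
    have "U ** matrix_inv U = mat 1 \<and> matrix_inv U ** U = mat 1"
      unfolding matrix_inv_def by (rule someI_ex[OF ex])
    then have "matrix_inv U ** U = mat 1" by simp
    then have "matrix_inv U ** U ** adj U = adj U" by simp
    then show ?thesis by (simp add: matrix_mul_assoc[symmetric] UU1)
  qed
  obtain u where u: "U *v \<Psi> = u *s \<Psi>" using eig_U by (auto simp: is_eigvec_def)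
  have p0: "\<Psi> \<noteq> 0" using eig_U by (simp add: is_eigvec_def)
  have "adj U *v (U *v \<Psi>) = \<Psi>" by (simp add: matrix_vector_mul_assoc UU2)
  then have pu: "u *s (adj U *v \<Psi>) = \<Psi>" by (simp add: u vector_scalar_commute)
  have u0: "u \<noteq> 0" using pu p0 by auto
  have adjU: "adj U *v \<Psi> = inverse u *s \<Psi>"
  proof -
    have "inverse u *s (u *s (adj U *v \<Psi>)) = inverse u *s \<Psi>" using pu by simp
    then show ?thesis using u0 by (simp add: vector_smult_assoc)
  qed
  have uu: "cnj u * u = 1"
  proof -
    have a: "adj (adj U) *v \<Psi> = u *s \<Psi>" by (simp add: adj_adj u)
    have "expval \<Psi> (adj U ** U) = cnj u * expval \<Psi> U" by (rule ev_left[OF a])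
    also have "expval \<Psi> U = expval \<Psi> (mat 1 ** U)" by simp
    also have "\<dots> = u" using ev_right[OF u, of "mat 1"] n1 by simp
    finally show ?thesis using UU2 n1 by simp
  qed
  have TIbase: "\<And>X. expval \<Psi> (U ** X ** matrix_inv U) = expval \<Psi> X"
  proof -
    fix X
    have "expval \<Psi> (U ** X ** adj U) = inverse u * expval \<Psi> (U ** X)" by (rule ev_right[OF adjU])
    also have "expval \<Psi> (U ** X) = cnj (inverse u) * expval \<Psi> X" by (rule ev_left[OF adjU])
    finally have "expval \<Psi> (U ** X ** adj U) = (inverse u * cnj (inverse u)) * expval \<Psi> X" by simp
    moreover have "inverse u * cnj (inverse u) = 1" using uu u0
      by (simp add: complex_cnj_inverse[symmetric] field_simps)
    ultimately show "expval \<Psi> (U ** X ** matrix_inv U) = expval \<Psi> X" by (simp add: Ui)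
  qed
  have TI: "\<And>Op k. transl_cov U Op \<Longrightarrow> expval \<Psi> (Op k) = expval \<Psi> (Op 0)"
  proof -
    fix Op :: "int \<Rightarrow> 'n op" and k
    assume c: "transl_cov U Op"
    show "expval \<Psi> (Op k) = expval \<Psi> (Op 0)"
      by (rule int_shift_const[where f="\<lambda>k. expval \<Psi> (Op k)"]) (simp add: c[unfolded transl_cov_def, rule_format] TIbase)
  qed
  have covprod: "\<And>Pa Pb a b. transl_cov U Pa \<Longrightarrow> transl_cov U Pb \<Longrightarrow> transl_cov U (\<lambda>z. Pa (z + a) ** Pb (z + b))"
  proof -
    fix Pa Pb :: "int \<Rightarrow> 'n op" and a b
    assume c1: "transl_cov U Pa" and c2: "transl_cov U Pb"
    show "transl_cov U (\<lambda>z. Pa (z + a) ** Pb (z + b))"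
      unfolding transl_cov_def
    proof
      fix z
      have e1: "Pa (z + 1 + a) = U ** Pa (z + a) ** adj U"
        using c1[unfolded transl_cov_def, rule_format, of "z + a"] by (simp add: Ui add_ac)
      have e2: "Pb (z + 1 + b) = U ** Pb (z + b) ** adj U"
        using c2[unfolded transl_cov_def, rule_format, of "z + b"] by (simp add: Ui add_ac)
      have "U ** Pa (z + a) ** adj U ** (U ** Pb (z + b) ** adj U)
          = U ** Pa (z + a) ** (adj U ** U) ** Pb (z + b) ** adj U"
        by (simp add: matrix_mul_assoc)
      also have "\<dots> = U ** (Pa (z + a) ** Pb (z + b)) ** adj U"
        by (simp add: UU2 matrix_mul_assoc)
      finally show "Pa (z + 1 + a) ** Pb (z + 1 + b) = U ** (Pa (z + a) ** Pb (z + b)) ** matrix_inv U"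
        by (simp add: e1 e2 Ui)
    qed
  qed
  have TI2: "\<And>Pa Pb a b k. transl_cov U Pa \<Longrightarrow> transl_cov U Pb \<Longrightarrow>
      expval \<Psi> (Pa (k + a) ** Pb (k + b)) = expval \<Psi> (Pa a ** Pb b)"
    using TI[OF covprod] by fastforce
  obtain E where E: "H *v \<Psi> = E *s \<Psi>" using eig_H by (auto simp: is_eigvec_def)
  have commzero: "\<And>X. expval \<Psi> (comm H X) = 0"
  proof -
    fix X
    show "expval \<Psi> (comm H X) = 0"
      using herm_eig[OF H_herm E norm_Psi] by (simp add: comm_def ev_diff)
  qed
  define A where "A d = expval \<Psi> (J \<alpha> d ** q \<beta> 0)" for d
  define B where "B d = expval \<Psi> (q \<alpha> d ** J \<beta> 0)" for d
  define C where "C d = A d - B (d - 1)" for d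
  have step: "\<And>x. C (x + 1) = C x"
  proof -
    fix x
    have "0 = \<i> * expval \<Psi> (comm H (q \<alpha> x ** q \<beta> 0))" by (simp add: commzero)
    also have "\<dots> = \<i> * expval \<Psi> (comm H (q \<alpha> x) ** q \<beta> 0) + \<i> * expval \<Psi> (q \<alpha> x ** comm H (q \<beta> 0))"
      by (simp add: comm_prod ev_add distrib_left)
    also have "\<dots> = expval \<Psi> ((mat \<i> ** comm H (q \<alpha> x)) ** q \<beta> 0) + expval \<Psi> (q \<alpha> x ** (mat \<i> ** comm H (q \<beta> 0)))"
      by (simp add: ev_mat2 ev_mat matrix_mul_assoc[symmetric])
    also have "\<dots> = (A x - A (x + 1)) + (B x - expval \<Psi> (q \<alpha> x ** J \<beta> 1))"
      unfolding continuity by (simp add: ev_diffL ev_diffR A_def B_def)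
    also have "expval \<Psi> (q \<alpha> x ** J \<beta> 1) = B (x - 1)"
      using TI2[where Pa="q \<alpha>" and Pb="J \<beta>" and k="1" and a="x - 1" and b="0", OF q_cov J_cov] by (simp add: B_def)
    finally show "C (x + 1) = C x" by (simp add: C_def algebra_simps)
  qed
  have Cconst: "\<And>x. C x = C 0" by (rule int_shift_const, rule step)
  have LHS: "\<And>x. expval \<Psi> (J \<alpha> x ** q \<beta> 0 - q \<alpha> x ** J \<beta> 1) = C x"
  proof -
    fix x
    have "expval \<Psi> (q \<alpha> x ** J \<beta> 1) = B (x - 1)"
      using TI2[where Pa="q \<alpha>" and Pb="J \<beta>" and k="1" and a="x - 1" and b="0", OF q_cov J_cov] by (simp add: B_def)
    then show "expval \<Psi> (J \<alpha> x ** q \<beta> 0 - q \<alpha> x ** J \<beta> 1) = C x"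
      by (simp add: ev_diff C_def A_def)
  qed
  obtain la where la: "Q \<alpha> *v \<Psi> = la *s \<Psi>" using eig_Qa by (auto simp: is_eigvec_def)
  obtain mu where mu: "Q \<beta> *v \<Psi> = mu *s \<Psi>" using eig_Qb by (auto simp: is_eigvec_def)
  have qsum: "\<And>a. expval \<Psi> (Q a) = of_nat L * expval \<Psi> (q a 0)"
  proof -
    fix a
    have "expval \<Psi> (Q a) = (\<Sum>x\<in>{1..int L}. expval \<Psi> (q a x))" by (simp add: Q_def ev_sum)
    also have "\<dots> = (\<Sum>x\<in>{1..int L}. expval \<Psi> (q a 0))" by (rule sum.cong[OF refl], rule TI[OF q_cov])
    finally show "expval \<Psi> (Q a) = of_nat L * expval \<Psi> (q a 0)" by simp
  qed
  have la_eq: "la = of_nat L * expval \<Psi> (q \<alpha> 0)"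
    using herm_eig(4)[OF Q_herm la norm_Psi] qsum[of \<alpha>] by simp
  have mu_eq: "mu = of_nat L * expval \<Psi> (q \<beta> 0)"
    using herm_eig(4)[OF Q_herm mu norm_Psi] qsum[of \<beta>] by simp
  let ?S = "{- int L..-1}"
  have cardS: "card ?S = L" by simp
  have sumC0: "(\<Sum>d\<in>?S. C d) = (\<Sum>d\<in>?S. C 0)" by (rule sum.cong[OF refl], rule Cconst)
  have sumC: "(\<Sum>d\<in>?S. C d) = of_nat L * C 0" unfolding sumC0 using cardS by simp
  have sumA: "(\<Sum>d\<in>?S. A d) = mu * expval \<Psi> (J \<alpha> 0)"
  proof -
    have "(\<Sum>d\<in>?S. A d) = (\<Sum>y\<in>{1..int L}. A (- y))"
      by (rule sum.reindex_bij_witness[of _ uminus uminus]) auto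
    also have "\<dots> = (\<Sum>y\<in>{1..int L}. expval \<Psi> (J \<alpha> 0 ** q \<beta> y))"
    proof (rule sum.cong[OF refl])
      fix y
      show "A (- y) = expval \<Psi> (J \<alpha> 0 ** q \<beta> y)"
        using TI2[where Pa="J \<alpha>" and Pb="q \<beta>" and k="y" and a="- y" and b="0", OF J_cov q_cov] by (simp add: A_def)
    qed
    also have "\<dots> = expval \<Psi> (J \<alpha> 0 ** Q \<beta>)" by (simp add: Q_def ev_sumR)
    also have "\<dots> = mu * expval \<Psi> (J \<alpha> 0)" by (rule ev_right[OF mu])
    finally show ?thesis .
  qed
  have sumB: "(\<Sum>d\<in>?S. B (d - 1)) = la * expval \<Psi> (J \<beta> 0)"
  proof -
    have "(\<Sum>d\<in>?S. B (d - 1)) = (\<Sum>e\<in>{1..int L}. B (e - int L - 2))"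
      by (rule sum.reindex_bij_witness[of _ "\<lambda>e. e - int L - 1" "\<lambda>d. d + int L + 1"]) auto
    also have "\<dots> = (\<Sum>e\<in>{1..int L}. expval \<Psi> (q \<alpha> e ** J \<beta> (int L + 2)))"
    proof (rule sum.cong[OF refl])
      fix e
      show "B (e - int L - 2) = expval \<Psi> (q \<alpha> e ** J \<beta> (int L + 2))"
        using TI2[where Pa="q \<alpha>" and Pb="J \<beta>" and k="int L + 2" and a="e - int L - 2" and b="0", OF q_cov J_cov] by (simp add: B_def)
    qed
    also have "\<dots> = expval \<Psi> (Q \<alpha> ** J \<beta> (int L + 2))" by (simp add: Q_def ev_sumL)
    also have "\<dots> = la * expval \<Psi> (J \<beta> (int L + 2))" by (rule herm_eig(2)[OF Q_herm la norm_Psi])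
    also have "expval \<Psi> (J \<beta> (int L + 2)) = expval \<Psi> (J \<beta> 0)" by (rule TI[OF J_cov])
    finally show ?thesis .
  qed
  have "of_nat L * C 0 = mu * expval \<Psi> (J \<alpha> 0) - la * expval \<Psi> (J \<beta> 0)"
    using sumC sumA sumB by (simp add: C_def sum_subtractf)
  also have "\<dots> = of_nat L * (expval \<Psi> (J \<alpha> 0) * expval \<Psi> (q \<beta> 0) - expval \<Psi> (q \<alpha> 0) * expval \<Psi> (J \<beta> 0))"
    by (simp add: la_eq mu_eq algebra_simps)
  finally have "C 0 = expval \<Psi> (J \<alpha> 0) * expval \<Psi> (q \<beta> 0) - expval \<Psi> (q \<alpha> 0) * expval \<Psi> (J \<beta> 0)"
    using L_pos by simp
  then show ?thesis using LHS Cconst by simp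
qed

end
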